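(* Let $G$ be a finite group. (1) The Fitting subgroup $\mathrm{Fit}(G)$ is atomically universally definable. (2) If $N\le H\le G$ with $N\trianglelefteq G$, $H/N$ atomically universally definable in $G/N$ and $N$ atomically universally definable in $G$, then $H$ is atomically universally definable in $G$. (3) All terms $\mathcal{U}_iG$ of the upper Fitting series are atomically universally definable. (4) If $H\le G$ is inducible, then the centralizer $C_G(H)=\{g\in G: gh=hg\text{ for all }h\in H\}$ is atomically universally definable.
   Context: An expression over $G$ is a word over $G\cup\mathcal{X}\cup\mathcal{X}^{-1}$ ($\mathcal{X}$ variables, $\mathcal{X}^{-1}$ formal inverses), evaluated under assignments $\sigma:\mathcal{X}\to G$ extended by $\sigma(X^{-1})=\sigma(X)^{-1}$, $\sigma(g)=g$. A subset $S\subseteq G$ is inducible if there is an expression $\alpha$ with $S=\{\sigma(\alpha):\sigma:\mathcal{X}\to G\}$. A subset $S\subseteq G$ is atomically universally definable if there is an expression $\alpha$ over variables $\{X,Y_1,Y_2,\dots\}$ such that $S=\{g\in G: (\sigma\cup[X\mapsto g])(\alpha)=1\text{ for all }\sigma:\{Y_1,Y_2,\dots\}\to G\}$. $\mathrm{Fit}(G)$ is the largest nilpotent normal subgroup of $G$; the upper Fitting series is $\mathcal{U}_0G=1$, $\mathcal{U}_{i+1}G/\mathcal{U}_iG=\mathrm{Fit}(G/\mathcal{U}_iG)$. *)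

theory Defs
  imports "HOL-Algebra.Algebra"
begin

datatype 'g atom = Const 'g | Var nat | InvVar nat

type_synonym 'g expr = "'g atom list"

definition expr_over :: "('g, 'b) monoid_scheme \<Rightarrow> 'g expr \<Rightarrow> bool" where
  "expr_over G w \<longleftrightarrow> (\<forall>g. Const g \<in> set w \<longrightarrow> g \<in> carrier G)"

fun atom_val :: "('g, 'b) monoid_scheme \<Rightarrow> (nat \<Rightarrow> 'g) \<Rightarrow> 'g atom \<Rightarrow> 'g" where
  "atom_val G \<sigma> (Const g) = g"
| "atom_val G \<sigma> (Var i) = \<sigma> i"
| "atom_val G \<sigma> (InvVar i) = inv\<^bsub>G\<^esub> (\<sigma> i)"

fun expr_eval :: "('g, 'b) monoid_scheme \<Rightarrow> (nat \<Rightarrow> 'g) \<Rightarrow> 'g expr \<Rightarrow> 'g" where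
  "expr_eval G \<sigma> [] = \<one>\<^bsub>G\<^esub>"
| "expr_eval G \<sigma> (a # w) = atom_val G \<sigma> a \<otimes>\<^bsub>G\<^esub> expr_eval G \<sigma> w"

definition assignment :: "('g, 'b) monoid_scheme \<Rightarrow> (nat \<Rightarrow> 'g) \<Rightarrow> bool" where
  "assignment G \<sigma> \<longleftrightarrow> (\<forall>i. \<sigma> i \<in> carrier G)"

definition inducible :: "('g, 'b) monoid_scheme \<Rightarrow> 'g set \<Rightarrow> bool" where
  "inducible G S \<longleftrightarrow> (\<exists>\<alpha>. expr_over G \<alpha> \<and> S = {expr_eval G \<sigma> \<alpha> | \<sigma>. assignment G \<sigma>})"

text \<open>Atomically universally definable: variable 0 plays the role of X, variables
 1, 2, ... the roles of Y1, Y2, ...\<close>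
definition aud :: "('g, 'b) monoid_scheme \<Rightarrow> 'g set \<Rightarrow> bool" where
  "aud G S \<longleftrightarrow> (\<exists>\<alpha>. expr_over G \<alpha> \<and>
      S = {g \<in> carrier G. \<forall>\<sigma>. assignment G \<sigma> \<longrightarrow> expr_eval G (\<sigma>(0 := g)) \<alpha> = \<one>\<^bsub>G\<^esub>})"

definition comm_subgroup :: "('g, 'b) monoid_scheme \<Rightarrow> 'g set \<Rightarrow> 'g set \<Rightarrow> 'g set" where
  "comm_subgroup G A B = generate G
     {x \<otimes>\<^bsub>G\<^esub> y \<otimes>\<^bsub>G\<^esub> inv\<^bsub>G\<^esub> x \<otimes>\<^bsub>G\<^esub> inv\<^bsub>G\<^esub> y | x y. x \<in> A \<and> y \<in> B}"

primrec lower_central :: "('g, 'b) monoid_scheme \<Rightarrow> nat \<Rightarrow> 'g set" where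
  "lower_central G 0 = carrier G"
| "lower_central G (Suc n) = comm_subgroup G (lower_central G n) (carrier G)"

definition nilpotent :: "('g, 'b) monoid_scheme \<Rightarrow> bool" where
  "nilpotent G \<longleftrightarrow> group G \<and> (\<exists>n. lower_central G n = {\<one>\<^bsub>G\<^esub>})"

definition Fitting :: "('g, 'b) monoid_scheme \<Rightarrow> 'g set" where
  "Fitting G = (THE N. N \<lhd> G \<and> nilpotent (G\<lparr>carrier := N\<rparr>) \<and>
      (\<forall>M. M \<lhd> G \<and> nilpotent (G\<lparr>carrier := M\<rparr>) \<longrightarrow> M \<subseteq> N))"

text \<open>Upper Fitting series: U 0 = 1, U (i+1) is the preimage of Fit(G / U i)
 (the union of the cosets belonging to Fit(G/U i)).\<close>
primrec upper_Fitting :: "('g, 'b) monoid_scheme \<Rightarrow> nat \<Rightarrow> 'g set" where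
  "upper_Fitting G 0 = {\<one>\<^bsub>G\<^esub>}"
| "upper_Fitting G (Suc i) = \<Union> (Fitting (G Mod upper_Fitting G i))"

end

theory Submission
  imports Defs
begin


definition cm :: "('g,'b) monoid_scheme \<Rightarrow> 'g \<Rightarrow> 'g \<Rightarrow> 'g" where
  "cm G x y = x \<otimes>\<^bsub>G\<^esub> y \<otimes>\<^bsub>G\<^esub> inv\<^bsub>G\<^esub> x \<otimes>\<^bsub>G\<^esub> inv\<^bsub>G\<^esub> y"

fun inv_atom :: "('g,'b) monoid_scheme \<Rightarrow> 'g atom \<Rightarrow> 'g atom" where
  "inv_atom G (Const g) = Const (inv\<^bsub>G\<^esub> g)"
| "inv_atom G (Var i) = InvVar i"
| "inv_atom G (InvVar i) = Var i"

definition inv_expr :: "('g,'b) monoid_scheme \<Rightarrow> 'g expr \<Rightarrow> 'g expr" where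
  "inv_expr G w = rev (map (inv_atom G) w)"

fun subst_atom :: "('g,'b) monoid_scheme \<Rightarrow> (nat \<Rightarrow> 'g expr) \<Rightarrow> 'g atom \<Rightarrow> 'g expr" where
  "subst_atom G f (Const g) = [Const g]"
| "subst_atom G f (Var i) = f i"
| "subst_atom G f (InvVar i) = inv_expr G (f i)"

definition subst :: "('g,'b) monoid_scheme \<Rightarrow> (nat \<Rightarrow> 'g expr) \<Rightarrow> 'g expr \<Rightarrow> 'g expr" where
  "subst G f w = concat (map (subst_atom G f) w)"

definition comm_expr :: "('g,'b) monoid_scheme \<Rightarrow> 'g expr \<Rightarrow> 'g expr \<Rightarrow> 'g expr" where
  "comm_expr G u v = u @ v @ inv_expr G u @ inv_expr G v"

lemma expr_over_append[simp]: "expr_over G (u @ v) \<longleftrightarrow> expr_over G u \<and> expr_over G v"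
  unfolding expr_over_def by auto

lemma expr_over_Cons[simp]: "expr_over G (a # v) \<longleftrightarrow> (\<forall>g. a = Const g \<longrightarrow> g \<in> carrier G) \<and> expr_over G v"
  unfolding expr_over_def by auto

lemma expr_over_Nil[simp]: "expr_over G []"
  unfolding expr_over_def by auto

context group
begin

lemma atom_val_closed:
  assumes "assignment G \<sigma>" "\<forall>g. a = Const g \<longrightarrow> g \<in> carrier G"
  shows "atom_val G \<sigma> a \<in> carrier G"
  using assms by (cases a) (auto simp: assignment_def)

lemma eval_closed:
  assumes "assignment G \<sigma>" "expr_over G w"
  shows "expr_eval G \<sigma> w \<in> carrier G"
  using assms(2) by (induction w) (auto intro!: atom_val_closed[OF assms(1)])

lemma eval_append:
  assumes "assignment G \<sigma>" "expr_over G u" "expr_over G v"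
  shows "expr_eval G \<sigma> (u @ v) = expr_eval G \<sigma> u \<otimes> expr_eval G \<sigma> v"
  using assms(2)
proof (induction u)
  case Nil
  then show ?case using eval_closed[OF assms(1,3)] by simp
next
  case (Cons a u)
  then show ?case using eval_closed[OF assms(1,3)] eval_closed[OF assms(1)]
      atom_val_closed[OF assms(1)] by (simp add: m_assoc)
qed

lemma expr_over_inv_expr[simp]: "expr_over G w \<Longrightarrow> expr_over G (inv_expr G w)"
proof (induction w)
  case (Cons a w)
  then show ?case by (cases a) (auto simp: inv_expr_def)
qed (simp add: inv_expr_def)

lemma eval_inv_expr:
  assumes "assignment G \<sigma>" "expr_over G w"
  shows "expr_eval G \<sigma> (inv_expr G w) = inv (expr_eval G \<sigma> w)"
  using assms(2)
proof (induction w)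
  case Nil
  then show ?case by (simp add: inv_expr_def)
next
  case (Cons a w)
  have ea: "expr_over G [inv_atom G a]" using Cons.prems by (cases a) auto
  have av: "atom_val G \<sigma> (inv_atom G a) = inv (atom_val G \<sigma> a)"
    using Cons.prems assms(1) by (cases a) (auto simp: assignment_def)
  have "expr_eval G \<sigma> (inv_expr G (a # w)) = expr_eval G \<sigma> (inv_expr G w @ [inv_atom G a])"
    by (simp add: inv_expr_def)
  also have "\<dots> = expr_eval G \<sigma> (inv_expr G w) \<otimes> expr_eval G \<sigma> [inv_atom G a]"
    using Cons.prems ea by (intro eval_append assms(1)) auto
  also have "\<dots> = inv (expr_eval G \<sigma> w) \<otimes> inv (atom_val G \<sigma> a)"
    using Cons av assms(1) by (cases a) (auto simp: assignment_def)
  also have "\<dots> = inv (atom_val G \<sigma> a \<otimes> expr_eval G \<sigma> w)"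
    using Cons.prems eval_closed[OF assms(1)] atom_val_closed[OF assms(1)] by (simp add: inv_mult_group)
  finally show ?case by simp
qed

lemma expr_over_subst:
  assumes "expr_over G w" "\<And>i. expr_over G (f i)"
  shows "expr_over G (subst G f w)"
  using assms(1)
proof (induction w)
  case (Cons a w)
  then show ?case using assms(2) by (cases a) (auto simp: subst_def)
qed (simp add: subst_def)

lemma assignment_eval:
  assumes "assignment G \<sigma>" "\<And>i. expr_over G (f i)"
  shows "assignment G (\<lambda>i. expr_eval G \<sigma> (f i))"
  using assms eval_closed unfolding assignment_def by auto

lemma eval_subst:
  assumes "assignment G \<sigma>" "expr_over G w" "\<And>i. expr_over G (f i)"
  shows "expr_eval G \<sigma> (subst G f w) = expr_eval G (\<lambda>i. expr_eval G \<sigma> (f i)) w"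
  using assms(2)
proof (induction w)
  case Nil
  then show ?case by (simp add: subst_def)
next
  case (Cons a w)
  have sw: "subst G f (a # w) = subst_atom G f a @ subst G f w" by (simp add: subst_def)
  have e1: "expr_over G (subst_atom G f a)" using Cons.prems assms(3) by (cases a) auto
  have e2: "expr_over G (subst G f w)" using Cons.prems assms(3) expr_over_subst by auto
  have av: "expr_eval G \<sigma> (subst_atom G f a) = atom_val G (\<lambda>i. expr_eval G \<sigma> (f i)) a"
    using Cons.prems assms by (cases a) (auto simp: eval_inv_expr eval_closed)
  show ?case unfolding sw using Cons e1 e2 av by (simp add: eval_append[OF assms(1)])
qed

lemma eval_comm_expr:
  assumes "assignment G \<sigma>" "expr_over G u" "expr_over G v"
  shows "expr_eval G \<sigma> (comm_expr G u v) = cm G (expr_eval G \<sigma> u) (expr_eval G \<sigma> v)"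
  using assms eval_closed[OF assms(1)]
  by (simp add: comm_expr_def eval_append eval_inv_expr cm_def m_assoc)

lemma expr_over_comm_expr[simp]:
  "expr_over G u \<Longrightarrow> expr_over G v \<Longrightarrow> expr_over G (comm_expr G u v)"
  by (simp add: comm_expr_def)

end



primrec gam :: "('g,'b) monoid_scheme \<Rightarrow> 'g set \<Rightarrow> nat \<Rightarrow> 'g set" where
  "gam G K 0 = K"
| "gam G K (Suc i) = generate G {cm G x y | x y. x \<in> gam G K i \<and> y \<in> K}"

primrec lcomm :: "('g,'b) monoid_scheme \<Rightarrow> 'g \<Rightarrow> (nat \<Rightarrow> 'g) \<Rightarrow> nat \<Rightarrow> 'g" where
  "lcomm G a f 0 = a"
| "lcomm G a f (Suc j) = cm G (lcomm G a f j) (f j)"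

primrec Aset :: "('g,'b) monoid_scheme \<Rightarrow> 'g set \<Rightarrow> nat \<Rightarrow> 'g set" where
  "Aset G S 0 = {\<one>\<^bsub>G\<^esub>}"
| "Aset G S (Suc j) = {a \<in> carrier G. \<forall>s\<in>S. cm G a s \<in> Aset G S j}"

lemma lcm_shift: "lcomm G a f (Suc j) = lcomm G (cm G a (f 0)) (\<lambda>i. f (Suc i)) j"
  by (induction j) auto

context group
begin

lemma inv_cancel_assoc1[simp]: "x \<in> carrier G \<Longrightarrow> y \<in> carrier G \<Longrightarrow> inv x \<otimes> (x \<otimes> y) = y"
  by (simp add: m_assoc[symmetric])

lemma inv_cancel_assoc2[simp]: "x \<in> carrier G \<Longrightarrow> y \<in> carrier G \<Longrightarrow> x \<otimes> (inv x \<otimes> y) = y"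
  by (simp add: m_assoc[symmetric])

lemma cm_closed[simp]: "x \<in> carrier G \<Longrightarrow> y \<in> carrier G \<Longrightarrow> cm G x y \<in> carrier G"
  by (simp add: cm_def)

lemma lcm_closed: "a \<in> carrier G \<Longrightarrow> (\<forall>i. f i \<in> carrier G) \<Longrightarrow> lcomm G a f j \<in> carrier G"
  by (induction j) auto

lemma cm_one_left[simp]: "s \<in> carrier G \<Longrightarrow> cm G \<one> s = \<one>"
  by (simp add: cm_def)

lemma cm_one_right[simp]: "s \<in> carrier G \<Longrightarrow> cm G s \<one> = \<one>"
  by (simp add: cm_def)

lemma cm_mult_left:
  assumes "a \<in> carrier G" "b \<in> carrier G" "s \<in> carrier G"
  shows "cm G (a \<otimes> b) s = a \<otimes> cm G b s \<otimes> inv a \<otimes> cm G a s"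
  using assms by (simp add: cm_def m_assoc inv_mult_group)

lemma cm_inv_left:
  assumes "a \<in> carrier G" "s \<in> carrier G"
  shows "cm G (inv a) s = inv a \<otimes> inv (cm G a s) \<otimes> a"
  using assms by (simp add: cm_def m_assoc inv_mult_group)

lemma cm_conj:
  assumes "a \<in> carrier G" "s \<in> carrier G" "g \<in> carrier G"
  shows "g \<otimes> cm G a s \<otimes> inv g = cm G (g \<otimes> a \<otimes> inv g) (g \<otimes> s \<otimes> inv g)"
  using assms by (simp add: cm_def m_assoc inv_mult_group)

lemma cm_mult_right:
  assumes "a \<in> carrier G" "b \<in> carrier G" "s \<in> carrier G"
  shows "cm G s (a \<otimes> b) = cm G s a \<otimes> a \<otimes> cm G s b \<otimes> inv a"
  using assms by (simp add: cm_def m_assoc inv_mult_group)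

lemma cm_inv_right:
  assumes "a \<in> carrier G" "s \<in> carrier G"
  shows "cm G s (inv a) = inv a \<otimes> inv (cm G s a) \<otimes> a"
  using assms by (simp add: cm_def m_assoc inv_mult_group)


lemma generate_normal:
  assumes "T \<subseteq> carrier G" "\<And>g t. g \<in> carrier G \<Longrightarrow> t \<in> T \<Longrightarrow> g \<otimes> t \<otimes> inv g \<in> T"
  shows "generate G T \<lhd> G"
proof -
  have "g \<otimes> h \<otimes> inv g \<in> generate G T" if g: "g \<in> carrier G" and h: "h \<in> generate G T" for g h
    using h
  proof (induction rule: generate.induct)
    case one
    then show ?case using g by (simp add: generate.one)
  next
    case (incl h)
    then show ?case using assms(2)[OF g] by (simp add: generate.incl)
  next
    case (inv h)
    have "g \<otimes> inv h \<otimes> inv g = inv (g \<otimes> h \<otimes> inv g)"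
      using inv g assms(1) by (auto simp: inv_mult_group m_assoc)
    then show ?case using inv g assms(2)[OF g]
      by (metis generate.incl generate_m_inv_closed assms(1))
  next
    case (eng h1 h2)
    have h1: "h1 \<in> carrier G" and h2: "h2 \<in> carrier G"
      using eng.hyps generate_in_carrier assms(1) by auto
    have "g \<otimes> (h1 \<otimes> h2) \<otimes> inv g = (g \<otimes> h1 \<otimes> inv g) \<otimes> (g \<otimes> h2 \<otimes> inv g)"
      using g h1 h2 by (simp add: m_assoc)
    then show ?case using eng.IH by (simp add: generate.eng)
  qed
  then show ?thesis using generate_is_subgroup[OF assms(1)] by (simp add: normal_inv_iff)
qed

lemma gam_sub:
  assumes "subgroup K G"
  shows "gam G K i \<subseteq> K \<and> subgroup (gam G K i) G"
proof (induction i)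
  case 0
  then show ?case using assms by simp
next
  case (Suc i)
  have sub: "{cm G x y | x y. x \<in> gam G K i \<and> y \<in> K} \<subseteq> K"
    using Suc assms by (auto simp: cm_def subgroup.m_closed subgroup.m_inv_closed)
  have "gam G K (Suc i) \<subseteq> K" by simp (rule generate_subgroup_incl[OF sub assms])
  moreover have "subgroup (gam G K (Suc i)) G"
    using sub subgroup.subset[OF assms] by simp (rule generate_is_subgroup, blast)
  ultimately show ?case by simp
qed

lemma lower_central_eq:
  assumes "subgroup K G"
  shows "lower_central (G\<lparr>carrier := K\<rparr>) i = gam G K i"
proof (induction i)
  case 0
  then show ?case by simp
next
  case (Suc i)
  have gi: "gam G K i \<subseteq> K" using gam_sub[OF assms] by auto
  have "{x \<otimes>\<^bsub>G\<lparr>carrier := K\<rparr>\<^esub> y \<otimes>\<^bsub>G\<lparr>carrier := K\<rparr>\<^esub> inv\<^bsub>G\<lparr>carrier := K\<rparr>\<^esub> x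
          \<otimes>\<^bsub>G\<lparr>carrier := K\<rparr>\<^esub> inv\<^bsub>G\<lparr>carrier := K\<rparr>\<^esub> y | x y. x \<in> gam G K i \<and> y \<in> carrier (G\<lparr>carrier := K\<rparr>)}
      = {cm G x y | x y. x \<in> gam G K i \<and> y \<in> K}"
  proof -
    have inv_eq: "\<And>x. x \<in> K \<Longrightarrow> inv\<^bsub>G\<lparr>carrier := K\<rparr>\<^esub> x = inv x"
      using m_inv_consistent assms by blast
    have eq: "\<And>x y. x \<in> gam G K i \<Longrightarrow> y \<in> K \<Longrightarrow>
       x \<otimes> y \<otimes> inv\<^bsub>G\<lparr>carrier := K\<rparr>\<^esub> x \<otimes> inv\<^bsub>G\<lparr>carrier := K\<rparr>\<^esub> y = x \<otimes> y \<otimes> inv x \<otimes> inv y"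
      using gi by (auto simp: inv_eq subsetD)
    show ?thesis by (auto simp: cm_def) (metis eq)+
  qed
  moreover have "{cm G x y | x y. x \<in> gam G K i \<and> y \<in> K} \<subseteq> K"
    using gi assms by (auto simp: cm_def subgroup.m_closed subgroup.m_inv_closed)
  ultimately show ?case using Suc generate_consistent[OF _ assms]
    by (simp add: comm_subgroup_def)
qed

lemma nilpotent_iff:
  assumes "subgroup K G"
  shows "nilpotent (G\<lparr>carrier := K\<rparr>) \<longleftrightarrow> (\<exists>n. gam G K n = {\<one>})"
  using lower_central_eq[OF assms] subgroup.subgroup_is_group[OF assms is_group]
  by (simp add: nilpotent_def)

lemma gam_normal:
  assumes "K \<lhd> G"
  shows "gam G K i \<lhd> G"
proof (induction i)
  case 0
  then show ?case using assms by simp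
next
  case (Suc i)
  have K: "K \<subseteq> carrier G" using assms normal_imp_subgroup subgroup.subset by blast
  have gi: "gam G K i \<subseteq> carrier G" using Suc normal_imp_subgroup subgroup.subset by blast
  show ?case unfolding gam.simps
  proof (rule generate_normal)
    show "{cm G x y |x y. x \<in> gam G K i \<and> y \<in> K} \<subseteq> carrier G" using K gi by (auto intro!: cm_closed)
    fix g t assume g: "g \<in> carrier G" and t: "t \<in> {cm G x y |x y. x \<in> gam G K i \<and> y \<in> K}"
    then obtain x y where xy: "t = cm G x y" "x \<in> gam G K i" "y \<in> K" by blast
    have "x \<in> carrier G" "y \<in> carrier G" using xy K gi by auto
    then have "g \<otimes> t \<otimes> inv g = cm G (g \<otimes> x \<otimes> inv g) (g \<otimes> y \<otimes> inv g)"
      using xy(1) g cm_conj by auto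
    moreover have "g \<otimes> x \<otimes> inv g \<in> gam G K i" using Suc g xy normal_inv_iff by blast
    moreover have "g \<otimes> y \<otimes> inv g \<in> K" using assms g xy normal_inv_iff by blast
    ultimately show "g \<otimes> t \<otimes> inv g \<in> {cm G x y |x y. x \<in> gam G K i \<and> y \<in> K}" by blast
  qed
qed

end



context group
begin

lemma Aset_normal:
  assumes S: "S \<subseteq> carrier G" "\<And>g s. g \<in> carrier G \<Longrightarrow> s \<in> S \<Longrightarrow> g \<otimes> s \<otimes> inv g \<in> S"
  shows "Aset G S j \<lhd> G"
proof (induction j)
  case 0
  then show ?case using one_is_normal by simp
next
  case (Suc j)
  note N = Suc
  have sub: "subgroup (Aset G S j) G" using N normal_imp_subgroup by blast
  have conj: "g \<otimes> h \<otimes> inv g \<in> Aset G S j" if "g \<in> carrier G" "h \<in> Aset G S j" for g h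
    using N that normal_inv_iff by blast
  have Sc: "s \<in> carrier G" if "s \<in> S" for s using S that by auto
  have Ac: "x \<in> carrier G" if "x \<in> Aset G S j" for x using sub that subgroup.subset by blast
  have "subgroup (Aset G S (Suc j)) G"
  proof (rule subgroupI)
    show "Aset G S (Suc j) \<subseteq> carrier G" by auto
    show "Aset G S (Suc j) \<noteq> {}"
      using Sc subgroup.one_closed[OF sub] by (auto intro!: exI[of _ \<one>])
    fix a assume a: "a \<in> Aset G S (Suc j)"
    show "inv a \<in> Aset G S (Suc j)"
    proof -
      have "cm G (inv a) s \<in> Aset G S j" if s: "s \<in> S" for s
      proof -
        have "cm G (inv a) s = inv a \<otimes> inv (cm G a s) \<otimes> inv (inv a)"
          using a Sc[OF s] cm_inv_left by simp
        moreover have "inv (cm G a s) \<in> Aset G S j" using a s subgroup.m_inv_closed[OF sub] by auto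
        ultimately show ?thesis using conj[of "inv a" "inv (cm G a s)"] a by simp
      qed
      then show ?thesis using a by auto
    qed
    fix b assume b: "b \<in> Aset G S (Suc j)"
    show "a \<otimes> b \<in> Aset G S (Suc j)"
    proof -
      have "cm G (a \<otimes> b) s \<in> Aset G S j" if s: "s \<in> S" for s
      proof -
        have "cm G (a \<otimes> b) s = a \<otimes> cm G b s \<otimes> inv a \<otimes> cm G a s"
          using a b Sc[OF s] cm_mult_left by simp
        moreover have "a \<otimes> cm G b s \<otimes> inv a \<in> Aset G S j" using conj a b s by auto
        ultimately show ?thesis using a s subgroup.m_closed[OF sub] by auto
      qed
      then show ?thesis using a b by auto
    qed
  qed
  moreover have "g \<otimes> a \<otimes> inv g \<in> Aset G S (Suc j)" if g: "g \<in> carrier G" and a: "a \<in> Aset G S (Suc j)" for g a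
  proof -
    have "cm G (g \<otimes> a \<otimes> inv g) s \<in> Aset G S j" if s: "s \<in> S" for s
    proof -
      have s': "inv g \<otimes> s \<otimes> inv (inv g) \<in> S" using S(2)[of "inv g" s] g s by simp
      have "g \<otimes> cm G a (inv g \<otimes> s \<otimes> inv (inv g)) \<otimes> inv g
          = cm G (g \<otimes> a \<otimes> inv g) (g \<otimes> (inv g \<otimes> s \<otimes> inv (inv g)) \<otimes> inv g)"
        using cm_conj a g s' Sc by auto
      also have "g \<otimes> (inv g \<otimes> s \<otimes> inv (inv g)) \<otimes> inv g = s"
        using g Sc[OF s] by (simp add: m_assoc)
      finally have "cm G (g \<otimes> a \<otimes> inv g) s = g \<otimes> cm G a (inv g \<otimes> s \<otimes> inv (inv g)) \<otimes> inv g" by simp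
      then show ?thesis using conj g a s' by auto
    qed
    then show ?thesis using g a by auto
  qed
  ultimately show ?case by (simp add: normal_inv_iff)
qed

lemma Aset_gen:
  assumes S: "S \<subseteq> carrier G" "\<And>g s. g \<in> carrier G \<Longrightarrow> s \<in> S \<Longrightarrow> g \<otimes> s \<otimes> inv g \<in> S"
    and a: "a \<in> Aset G S (Suc j)" and k: "k \<in> generate G S"
  shows "cm G a k \<in> Aset G S j"
  using k
proof (induction rule: generate.induct)
  have sub: "subgroup (Aset G S j) G" using Aset_normal[OF S] normal_imp_subgroup by blast
  have ac: "a \<in> carrier G" using a by auto
  have conj: "g \<otimes> h \<otimes> inv g \<in> Aset G S j" if "g \<in> carrier G" "h \<in> Aset G S j" for g h
    using Aset_normal[OF S] that normal_inv_iff by blast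
  case one
  then show ?case using ac subgroup.one_closed[OF sub] by simp
next
  case (incl h)
  then show ?case using a by auto
next
  have sub: "subgroup (Aset G S j) G" using Aset_normal[OF S] normal_imp_subgroup by blast
  have ac: "a \<in> carrier G" using a by auto
  have conj: "g \<otimes> h \<otimes> inv g \<in> Aset G S j" if "g \<in> carrier G" "h \<in> Aset G S j" for g h
    using Aset_normal[OF S] that normal_inv_iff by blast
  case (inv h)
  have hc: "h \<in> carrier G" using inv S by auto
  have "cm G a (inv h) = inv h \<otimes> inv (cm G a h) \<otimes> inv (inv h)"
    using cm_inv_right ac hc by simp
  moreover have "cm G a h \<in> Aset G S j" using a inv by auto
  ultimately show ?case using conj[of "inv h" "inv (cm G a h)"] hc subgroup.m_inv_closed[OF sub] by simp
next
  have sub: "subgroup (Aset G S j) G" using Aset_normal[OF S] normal_imp_subgroup by blast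
  have ac: "a \<in> carrier G" using a by auto
  have conj: "g \<otimes> h \<otimes> inv g \<in> Aset G S j" if "g \<in> carrier G" "h \<in> Aset G S j" for g h
    using Aset_normal[OF S] that normal_inv_iff by blast
  case (eng h1 h2)
  have hc: "h1 \<in> carrier G" "h2 \<in> carrier G" using eng.hyps generate_in_carrier S by auto
  have "cm G a (h1 \<otimes> h2) = cm G a h1 \<otimes> (h1 \<otimes> cm G a h2 \<otimes> inv h1)"
    using cm_mult_right ac hc by (simp add: m_assoc)
  then show ?case using eng.IH conj hc subgroup.m_closed[OF sub] by simp
qed

lemma Aset_lcm:
  assumes S: "S \<subseteq> carrier G" "S \<noteq> {}"
  shows "a \<in> carrier G \<Longrightarrow> (\<And>f. (\<forall>i. f i \<in> S) \<Longrightarrow> lcomm G a f j = \<one>) \<Longrightarrow> a \<in> Aset G S j"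
proof (induction j arbitrary: a)
  case 0
  obtain s where "s \<in> S" using S by auto
  then show ?case using 0 by (auto dest: spec[of _ "\<lambda>i. s"])
next
  case (Suc j)
  have "cm G a s \<in> Aset G S j" if s: "s \<in> S" for s
  proof (rule Suc.IH)
    show "cm G a s \<in> carrier G" using s S Suc.prems by auto
    fix f :: "nat \<Rightarrow> 'a" assume f: "\<forall>i. f i \<in> S"
    have "lcomm G a (case_nat s f) (Suc j) = \<one>" using Suc.prems(2) f s by (simp split: nat.split)
    then show "lcomm G (cm G a s) f j = \<one>" by (simp add: lcm_shift del: lcomm.simps)
  qed
  then show ?case using Suc.prems by auto
qed

lemma nilp_crit:
  assumes S: "S \<subseteq> carrier G" "\<And>g s. g \<in> carrier G \<Longrightarrow> s \<in> S \<Longrightarrow> g \<otimes> s \<otimes> inv g \<in> S"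
    and ne: "S \<noteq> {}"
    and L: "\<And>x f. x \<in> S \<Longrightarrow> (\<forall>i. f i \<in> S) \<Longrightarrow> lcomm G x f c = \<one>"
  shows "gam G (generate G S) c = {\<one>}"
proof -
  let ?K = "generate G S"
  have Ksub: "subgroup ?K G" using generate_is_subgroup[OF S(1)] .
  have "S \<subseteq> Aset G S c"
  proof
    fix x assume x: "x \<in> S"
    show "x \<in> Aset G S c"
      by (rule Aset_lcm[OF S(1) ne]) (use x S L in auto)
  qed
  then have KA: "?K \<subseteq> Aset G S c"
    using generate_subgroup_incl Aset_normal[OF S] normal_imp_subgroup by blast
  have "i \<le> c \<Longrightarrow> gam G ?K i \<subseteq> Aset G S (c - i)" for i
  proof (induction i)
    case 0
    then show ?case using KA by simp
  next
    case (Suc i)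
    have e: "c - i = Suc (c - Suc i)" using Suc.prems by simp
    have "{cm G x y | x y. x \<in> gam G ?K i \<and> y \<in> ?K} \<subseteq> Aset G S (c - Suc i)"
    proof
      fix z assume "z \<in> {cm G x y | x y. x \<in> gam G ?K i \<and> y \<in> ?K}"
      then obtain x y where z: "z = cm G x y" "x \<in> gam G ?K i" "y \<in> ?K" by blast
      have "x \<in> Aset G S (Suc (c - Suc i))" using Suc z e by auto
      then show "z \<in> Aset G S (c - Suc i)" using Aset_gen[OF S] z by blast
    qed
    moreover have "subgroup (Aset G S (c - Suc i)) G"
      using Aset_normal[OF S] normal_imp_subgroup by blast
    ultimately show ?case
      using generate_subgroup_incl by simp
  qed
  from this[of c] have "gam G ?K c \<subseteq> {\<one>}" by simp
  moreover have "\<one> \<in> gam G ?K c" using gam_sub[OF Ksub] subgroup.one_closed by blast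
  ultimately show ?thesis by blast
qed

end



definition Wc :: "('g,'b) monoid_scheme \<Rightarrow> 'g set \<Rightarrow> nat \<Rightarrow> 'g set" where
  "Wc G Q i = (case i of 0 \<Rightarrow> carrier G | Suc k \<Rightarrow> gam G Q k)"

context group
begin

lemma normal_conjI: "Q \<lhd> G \<Longrightarrow> g \<in> carrier G \<Longrightarrow> h \<in> Q \<Longrightarrow> g \<otimes> h \<otimes> inv g \<in> Q"
  using normal_inv_iff by blast

lemma normal_sub: "Q \<lhd> G \<Longrightarrow> Q \<subseteq> carrier G"
  using normal_imp_subgroup subgroup.subset by blast

lemma gam_decr:
  assumes Q: "Q \<lhd> G" shows "gam G Q (Suc i) \<subseteq> gam G Q i"
proof -
  have Ni: "gam G Q i \<lhd> G" using gam_normal[OF Q] .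
  have "{cm G x y | x y. x \<in> gam G Q i \<and> y \<in> Q} \<subseteq> gam G Q i"
  proof
    fix z assume "z \<in> {cm G x y | x y. x \<in> gam G Q i \<and> y \<in> Q}"
    then obtain x y where z: "z = cm G x y" "x \<in> gam G Q i" "y \<in> Q" by blast
    have xc: "x \<in> carrier G" using z normal_sub[OF Ni] by auto
    have yc: "y \<in> carrier G" using z normal_sub[OF Q] by auto
    have "z = x \<otimes> (y \<otimes> inv x \<otimes> inv y)" using z xc yc by (simp add: cm_def m_assoc)
    moreover have "inv x \<in> gam G Q i"
      using z(2) subgroup.m_inv_closed[OF normal_imp_subgroup[OF Ni]] by blast
    then have "y \<otimes> inv x \<otimes> inv y \<in> gam G Q i"
      using normal_conjI[OF Ni yc] by blast
    ultimately show "z \<in> gam G Q i" using z(2) subgroup.m_closed[OF normal_imp_subgroup[OF Ni]] by simp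
  qed
  then show ?thesis using generate_subgroup_incl normal_imp_subgroup[OF Ni] by simp
qed

lemma gam_mono:
  assumes Q: "Q \<lhd> G" and "i \<le> i'" shows "gam G Q i' \<subseteq> gam G Q i"
  using assms(2)
proof (induction rule: dec_induct)
  case (step n)
  then show ?case using gam_decr[OF Q, of n] by blast
qed simp

lemma W_in:
  assumes Q: "Q \<lhd> G" and x: "x \<in> Wc G Q i" and s: "s \<in> Q"
  shows "cm G x s \<in> Wc G Q (Suc i)"
proof (cases i)
  case 0
  have xc: "x \<in> carrier G" using x 0 by (simp add: Wc_def)
  have sc: "s \<in> carrier G" using s normal_sub[OF Q] by auto
  have "cm G x s = (x \<otimes> s \<otimes> inv x) \<otimes> inv s" by (simp add: cm_def)
  moreover have "x \<otimes> s \<otimes> inv x \<in> Q" using normal_conjI[OF Q xc s] .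
  moreover have "inv s \<in> Q" using s subgroup.m_inv_closed[OF normal_imp_subgroup[OF Q]] by blast
  ultimately have "cm G x s \<in> Q"
    using subgroup.m_closed[OF normal_imp_subgroup[OF Q]] by simp
  then show ?thesis using 0 by (simp add: Wc_def)
next
  case (Suc i')
  then show ?thesis using x s by (auto simp: Wc_def intro!: generate.incl)
qed

lemma W_out:
  assumes Q: "Q \<lhd> G" and x: "x \<in> Wc G Q j" and s: "s \<in> carrier G"
  shows "cm G x s \<in> Wc G Q j"
proof (cases j)
  case 0
  then show ?thesis using x s by (simp add: Wc_def)
next
  case (Suc j')
  have Ni: "gam G Q j' \<lhd> G" using gam_normal[OF Q] .
  have xg: "x \<in> gam G Q j'" using x Suc by (simp add: Wc_def)
  have xc: "x \<in> carrier G" using xg normal_sub[OF Ni] by auto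
  have "cm G x s = x \<otimes> (s \<otimes> inv x \<otimes> inv s)" using xc s by (simp add: cm_def m_assoc)
  moreover have "inv x \<in> gam G Q j'"
    using xg subgroup.m_inv_closed[OF normal_imp_subgroup[OF Ni]] by blast
  then have "s \<otimes> inv x \<otimes> inv s \<in> gam G Q j'"
    using normal_conjI[OF Ni s] by blast
  ultimately have "cm G x s \<in> gam G Q j'" using xg subgroup.m_closed[OF normal_imp_subgroup[OF Ni]] by simp
  then show ?thesis using Suc by (simp add: Wc_def)
qed

lemma nilp_join:
  assumes M: "M \<lhd> G" and N: "N \<lhd> G" and cM: "gam G M a = {\<one>}" and cN: "gam G N b = {\<one>}"
  shows "gam G (generate G (M \<union> N)) (a + b + 1) = {\<one>}"
proof (rule nilp_crit)
  show S: "M \<union> N \<subseteq> carrier G" using normal_sub M N by auto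
  show "\<And>g s. g \<in> carrier G \<Longrightarrow> s \<in> M \<union> N \<Longrightarrow> g \<otimes> s \<otimes> inv g \<in> M \<union> N"
    using normal_conjI M N by blast
  show "M \<union> N \<noteq> {}" using normal_imp_subgroup[OF M] subgroup.one_closed by blast
  fix x and f :: "nat \<Rightarrow> 'a" assume x: "x \<in> M \<union> N" and f: "\<forall>i. f i \<in> M \<union> N"
  have fc: "\<forall>i. f i \<in> carrier G" using f S by auto
  have xc: "x \<in> carrier G" using x S by auto
  have claim: "\<exists>i j. i + j = Suc k \<and> lcomm G x f k \<in> Wc G M i \<and> lcomm G x f k \<in> Wc G N j" for k
  proof (induction k)
    case 0
    show ?case
    proof (cases "x \<in> M")
      case True
      then show ?thesis using xc by (intro exI[of _ 1] exI[of _ 0]) (simp add: Wc_def)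
    next
      case False
      then show ?thesis using x xc by (intro exI[of _ 0] exI[of _ 1]) (simp add: Wc_def)
    qed
  next
    case (Suc k)
    then obtain i j where ij: "i + j = Suc k" "lcomm G x f k \<in> Wc G M i" "lcomm G x f k \<in> Wc G N j" by blast
    show ?case
    proof (cases "f k \<in> M")
      case True
      then show ?thesis using ij W_in[OF M] W_out[OF N] fc
        by (intro exI[of _ "Suc i"] exI[of _ j]) auto
    next
      case False
      then have "f k \<in> N" using f by auto
      then show ?thesis using ij W_in[OF N] W_out[OF M] fc
        by (intro exI[of _ i] exI[of _ "Suc j"]) auto
    qed
  qed
  obtain i j where ij: "i + j = Suc (a + b + 1)" "lcomm G x f (a + b + 1) \<in> Wc G M i"
    "lcomm G x f (a + b + 1) \<in> Wc G N j" using claim by blast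
  show "lcomm G x f (a + b + 1) = \<one>"
  proof (cases "Suc a \<le> i")
    case True
    then obtain i' where "i = Suc i'" "a \<le> i'" by (cases i) auto
    then show ?thesis using ij gam_mono[OF M, of a i'] cM by (auto simp: Wc_def)
  next
    case False
    then have "Suc b \<le> j" using ij by simp
    then obtain j' where "j = Suc j'" "b \<le> j'" by (cases j) auto
    then show ?thesis using ij gam_mono[OF N, of b j'] cN by (auto simp: Wc_def)
  qed
qed

lemma Fitting_props:
  assumes fin: "finite (carrier G)"
  shows "Fitting G \<lhd> G \<and> nilpotent (G\<lparr>carrier := Fitting G\<rparr>) \<and>
         (\<forall>M. M \<lhd> G \<and> nilpotent (G\<lparr>carrier := M\<rparr>) \<longrightarrow> M \<subseteq> Fitting G)"
proof -
  define \<N> where "\<N> = {N. N \<lhd> G \<and> nilpotent (G\<lparr>carrier := N\<rparr>)}"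
  have "\<N> \<subseteq> Pow (carrier G)" using normal_sub by (auto simp: \<N>_def)
  then have finN: "finite \<N>" using fin finite_subset by blast
  have "gam G {\<one>} 0 = {\<one>}" by simp
  then have "nilpotent (G\<lparr>carrier := {\<one>}\<rparr>)" using nilpotent_iff[OF triv_subgroup] by blast
  then have "{\<one>} \<in> \<N>" using one_is_normal by (simp add: \<N>_def)
  then have ne: "card ` \<N> \<noteq> {}" by auto
  have "Max (card ` \<N>) \<in> card ` \<N>" using Max_in[OF _ ne] finN by blast
  then obtain N0 where N0: "N0 \<in> \<N>" "card N0 = Max (card ` \<N>)" by auto
  have cardle: "card M \<le> card N0" if "M \<in> \<N>" for M
    unfolding N0(2) using finN that by simp
  have max: "M \<subseteq> N0" if M: "M \<in> \<N>" for M
  proof -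
    let ?J = "generate G (M \<union> N0)"
    have Mn: "M \<lhd> G" and Mnil: "nilpotent (G\<lparr>carrier := M\<rparr>)" using M unfolding \<N>_def by blast+
    have N0n: "N0 \<lhd> G" and N0nil: "nilpotent (G\<lparr>carrier := N0\<rparr>)" using N0(1) unfolding \<N>_def by blast+
    have S: "M \<union> N0 \<subseteq> carrier G" using normal_sub[OF Mn] normal_sub[OF N0n] by blast
    have Jn: "?J \<lhd> G"
    proof (rule generate_normal[OF S])
      fix g t assume "g \<in> carrier G" "t \<in> M \<union> N0"
      then show "g \<otimes> t \<otimes> inv g \<in> M \<union> N0" using normal_conjI[OF Mn] normal_conjI[OF N0n] by blast
    qed
    obtain a where a: "gam G M a = {\<one>}"
      using Mnil nilpotent_iff[OF normal_imp_subgroup[OF Mn]] by blast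
    obtain b where b: "gam G N0 b = {\<one>}"
      using N0nil nilpotent_iff[OF normal_imp_subgroup[OF N0n]] by blast
    have "nilpotent (G\<lparr>carrier := ?J\<rparr>)"
      unfolding nilpotent_iff[OF normal_imp_subgroup[OF Jn]] using nilp_join[OF Mn N0n a b] by (rule exI)
    then have "?J \<in> \<N>" using Jn unfolding \<N>_def by blast
    then have "card ?J \<le> card N0" by (rule cardle)
    moreover have "N0 \<subseteq> ?J" using generate.incl[of _ "M \<union> N0" G] by blast
    moreover have "finite ?J" using fin normal_sub[OF Jn] finite_subset by blast
    ultimately have "N0 = ?J" by (intro card_seteq) simp_all
    moreover have "M \<subseteq> ?J" using generate.incl[of _ "M \<union> N0" G] by blast
    ultimately show ?thesis by simp
  qed
  have "Fitting G = N0"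
    unfolding Fitting_def
  proof (rule the_equality)
    show "N0 \<lhd> G \<and> nilpotent (G\<lparr>carrier := N0\<rparr>) \<and>
      (\<forall>M. M \<lhd> G \<and> nilpotent (G\<lparr>carrier := M\<rparr>) \<longrightarrow> M \<subseteq> N0)"
      using N0(1) max unfolding \<N>_def by blast
    fix N assume N: "N \<lhd> G \<and> nilpotent (G\<lparr>carrier := N\<rparr>) \<and>
      (\<forall>M. M \<lhd> G \<and> nilpotent (G\<lparr>carrier := M\<rparr>) \<longrightarrow> M \<subseteq> N)"
    then have "N \<in> \<N>" unfolding \<N>_def by blast
    then have "N \<subseteq> N0" using max by blast
    moreover have "N0 \<subseteq> N" using N N0(1) unfolding \<N>_def by blast
    ultimately show "N = N0" by blast
  qed
  moreover have "N0 \<lhd> G \<and> nilpotent (G\<lparr>carrier := N0\<rparr>)" using N0(1) unfolding \<N>_def by blast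
  moreover have "\<forall>M. M \<lhd> G \<and> nilpotent (G\<lparr>carrier := M\<rparr>) \<longrightarrow> M \<subseteq> N0"
    using max unfolding \<N>_def by blast
  ultimately show ?thesis by simp
qed

end



definition sx :: "nat \<Rightarrow> 'g expr" where
  "sx i = [Var (Suc i), Var 0, InvVar (Suc i)]"

primrec Lx :: "('g,'b) monoid_scheme \<Rightarrow> nat \<Rightarrow> 'g expr" where
  "Lx G 0 = sx 0"
| "Lx G (Suc j) = comm_expr G (Lx G j) (sx (Suc j))"

lemma expr_over_sx[simp]: "expr_over G (sx i)"
  by (simp add: sx_def)

context group
begin

lemma expr_over_Lx[simp]: "expr_over G (Lx G j)"
  by (induction j) (simp_all add: comm_expr_def)

lemma eval_sx:
  assumes "assignment G \<sigma>"
  shows "expr_eval G \<sigma> (sx i) = \<sigma> (Suc i) \<otimes> \<sigma> 0 \<otimes> inv (\<sigma> (Suc i))"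
  using assms by (simp add: sx_def assignment_def m_assoc)

lemma eval_Lx:
  assumes "assignment G \<sigma>"
  shows "expr_eval G \<sigma> (Lx G j) = lcomm G (\<sigma> 1 \<otimes> \<sigma> 0 \<otimes> inv (\<sigma> 1))
            (\<lambda>i. \<sigma> (Suc (Suc i)) \<otimes> \<sigma> 0 \<otimes> inv (\<sigma> (Suc (Suc i)))) j"
proof (induction j)
  case 0
  then show ?case using eval_sx[OF assms] by simp
next
  case (Suc j)
  then show ?case using eval_comm_expr[OF assms] eval_sx[OF assms] by simp
qed

lemma lcomm_gam:
  assumes F: "subgroup F G" and x: "x \<in> F" and f: "\<forall>i. f i \<in> F"
  shows "lcomm G x f j \<in> gam G F j"
proof (induction j)
  case 0
  then show ?case using x by simp
next
  case (Suc j)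
  then show ?case using f by (auto intro!: generate.incl)
qed

lemma part1:
  assumes fin: "finite (carrier G)"
  shows "aud G (Fitting G)"
proof -
  let ?F = "Fitting G"
  have Fn: "?F \<lhd> G" and Fnil: "nilpotent (G\<lparr>carrier := ?F\<rparr>)"
    and Fmax: "\<And>M. M \<lhd> G \<Longrightarrow> nilpotent (G\<lparr>carrier := M\<rparr>) \<Longrightarrow> M \<subseteq> ?F"
    using Fitting_props[OF fin] by blast+
  have Fsub: "subgroup ?F G" using normal_imp_subgroup[OF Fn] .
  obtain c where c: "gam G ?F c = {\<one>}" using Fnil nilpotent_iff[OF Fsub] by blast
  have eq: "?F = {g \<in> carrier G. \<forall>\<sigma>. assignment G \<sigma> \<longrightarrow> expr_eval G (\<sigma>(0 := g)) (Lx G c) = \<one>}"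
  proof (intro equalityI subsetI)
    fix g assume g: "g \<in> ?F"
    have gc: "g \<in> carrier G" using g normal_sub[OF Fn] by blast
    show "g \<in> {g \<in> carrier G. \<forall>\<sigma>. assignment G \<sigma> \<longrightarrow> expr_eval G (\<sigma>(0 := g)) (Lx G c) = \<one>}"
    proof (intro CollectI conjI allI impI gc)
      fix \<sigma> assume \<sigma>: "assignment G \<sigma>"
      have \<sigma>': "assignment G (\<sigma>(0 := g))" using \<sigma> gc by (simp add: assignment_def)
      have "expr_eval G (\<sigma>(0 := g)) (Lx G c) = lcomm G (\<sigma> 1 \<otimes> g \<otimes> inv (\<sigma> 1))
            (\<lambda>i. \<sigma> (Suc (Suc i)) \<otimes> g \<otimes> inv (\<sigma> (Suc (Suc i)))) c"
        using eval_Lx[OF \<sigma>'] by simp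
      also have "\<dots> \<in> gam G ?F c"
      proof (rule lcomm_gam[OF Fsub])
        have "\<sigma> i \<in> carrier G" for i using \<sigma> by (simp add: assignment_def)
        then show "\<sigma> 1 \<otimes> g \<otimes> inv (\<sigma> 1) \<in> ?F"
          "\<forall>i. \<sigma> (Suc (Suc i)) \<otimes> g \<otimes> inv (\<sigma> (Suc (Suc i))) \<in> ?F"
          using normal_conjI[OF Fn _ g] by blast+
      qed
      finally show "expr_eval G (\<sigma>(0 := g)) (Lx G c) = \<one>" using c by simp
    qed
  next
    fix g assume "g \<in> {g \<in> carrier G. \<forall>\<sigma>. assignment G \<sigma> \<longrightarrow> expr_eval G (\<sigma>(0 := g)) (Lx G c) = \<one>}"
    then have gc: "g \<in> carrier G"
      and H: "\<And>\<sigma>. assignment G \<sigma> \<Longrightarrow> expr_eval G (\<sigma>(0 := g)) (Lx G c) = \<one>" by auto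
    define S where "S = {y \<otimes> g \<otimes> inv y | y. y \<in> carrier G}"
    have Sc: "S \<subseteq> carrier G" using gc by (auto simp: S_def)
    have Sconj: "h \<otimes> s \<otimes> inv h \<in> S" if h: "h \<in> carrier G" and s: "s \<in> S" for h s
    proof -
      obtain y where y: "y \<in> carrier G" "s = y \<otimes> g \<otimes> inv y" using s by (auto simp: S_def)
      have "h \<otimes> s \<otimes> inv h = (h \<otimes> y) \<otimes> g \<otimes> inv (h \<otimes> y)"
        using y h gc by (simp add: m_assoc inv_mult_group)
      then show ?thesis using y h by (auto simp: S_def)
    qed
    have gS: "g \<in> S" unfolding S_def using gc by (auto intro!: exI[of _ \<one>])
    have gamK: "gam G (generate G S) c = {\<one>}"
    proof (rule nilp_crit[OF Sc Sconj])
      show "S \<noteq> {}" using gS by blast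
      fix x f assume x: "x \<in> S" and f: "\<forall>i::nat. f i \<in> S"
      obtain y0 where y0: "y0 \<in> carrier G" "x = y0 \<otimes> g \<otimes> inv y0" using x by (auto simp: S_def)
      define ys where "ys i = (SOME y. y \<in> carrier G \<and> f i = y \<otimes> g \<otimes> inv y)" for i
      have ys: "ys i \<in> carrier G \<and> f i = ys i \<otimes> g \<otimes> inv (ys i)" for i
      proof -
        have "\<exists>y. y \<in> carrier G \<and> f i = y \<otimes> g \<otimes> inv y" using f by (auto simp: S_def)
        then show ?thesis unfolding ys_def by (rule someI_ex)
      qed
      define \<sigma> where "\<sigma> i = (if i = 0 then \<one> else if i = 1 then y0 else ys (i - 2))" for i
      have \<sigma>: "assignment G \<sigma>" using y0 ys by (simp add: assignment_def \<sigma>_def)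
      have \<sigma>': "assignment G (\<sigma>(0 := g))" using \<sigma> gc by (simp add: assignment_def)
      have fe: "(\<lambda>i. ys i \<otimes> g \<otimes> inv (ys i)) = f"
      proof (rule ext)
        fix i show "ys i \<otimes> g \<otimes> inv (ys i) = f i" using ys[of i] by simp
      qed
      have "expr_eval G (\<sigma>(0 := g)) (Lx G c) = lcomm G x f c"
        using eval_Lx[OF \<sigma>'] y0 by (simp add: \<sigma>_def fe)
      then show "lcomm G x f c = \<one>" using H[OF \<sigma>] by simp
    qed
    have Kn: "generate G S \<lhd> G" by (rule generate_normal[OF Sc Sconj])
    have "nilpotent (G\<lparr>carrier := generate G S\<rparr>)"
      unfolding nilpotent_iff[OF normal_imp_subgroup[OF Kn]] using gamK by (rule exI)
    then have "generate G S \<subseteq> ?F" by (rule Fmax[OF Kn])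
    moreover have "g \<in> generate G S" using gS by (rule generate.incl)
    ultimately show "g \<in> ?F" by blast
  qed
  show ?thesis unfolding aud_def
    by (intro exI[of _ "Lx G c"] conjI expr_over_Lx eq)
qed

end



context group
begin

lemma cm_one_iff:
  assumes x: "x \<in> carrier G" and y: "y \<in> carrier G"
  shows "cm G x y = \<one> \<longleftrightarrow> x \<otimes> y = y \<otimes> x"
proof -
  have e: "cm G x y = (x \<otimes> y) \<otimes> inv (y \<otimes> x)" using x y by (simp add: cm_def inv_mult_group m_assoc)
  show ?thesis
  proof
    assume "cm G x y = \<one>"
    then have "(x \<otimes> y) \<otimes> inv (y \<otimes> x) \<otimes> (y \<otimes> x) = y \<otimes> x" using x y by (simp add: e)
    then show "x \<otimes> y = y \<otimes> x" using x y by (simp add: m_assoc del: inv_mult_group)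
  next
    assume "x \<otimes> y = y \<otimes> x"
    then show "cm G x y = \<one>" using x y by (simp add: e del: inv_mult_group)
  qed
qed

lemma part4:
  assumes ind: "inducible G H"
  shows "aud G {g \<in> carrier G. \<forall>h\<in>H. g \<otimes> h = h \<otimes> g}"
proof -
  obtain w where w: "expr_over G w" and Hw: "H = {expr_eval G \<sigma> w | \<sigma>. assignment G \<sigma>}"
    using ind unfolding inducible_def by blast
  define w' where "w' = subst G (\<lambda>i. [Var (Suc i)]) w"
  define \<delta> where "\<delta> = comm_expr G [Var 0] w'"
  have w'o: "expr_over G w'" unfolding w'_def by (rule expr_over_subst[OF w]) simp
  have \<delta>o: "expr_over G \<delta>" unfolding \<delta>_def using w'o by simp
  have ev: "expr_eval G (\<sigma>(0 := g)) \<delta> = cm G g (expr_eval G (\<lambda>i. \<sigma> (Suc i)) w)"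
    if \<sigma>: "assignment G \<sigma>" and g: "g \<in> carrier G" for \<sigma> g
  proof -
    have \<sigma>': "assignment G (\<sigma>(0 := g))" using \<sigma> g by (simp add: assignment_def)
    have "expr_eval G (\<sigma>(0 := g)) w' = expr_eval G (\<lambda>i. expr_eval G (\<sigma>(0 := g)) [Var (Suc i)]) w"
      unfolding w'_def by (rule eval_subst[OF \<sigma>' w]) simp
    also have "(\<lambda>i. expr_eval G (\<sigma>(0 := g)) [Var (Suc i)]) = (\<lambda>i. \<sigma> (Suc i))"
      using \<sigma> by (auto simp: assignment_def)
    finally have "expr_eval G (\<sigma>(0 := g)) w' = expr_eval G (\<lambda>i. \<sigma> (Suc i)) w" .
    moreover have "expr_eval G (\<sigma>(0 := g)) [Var 0] = g" using g by simp
    ultimately show ?thesis unfolding \<delta>_def using eval_comm_expr[OF \<sigma>'] w'o by simp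
  qed
  have "{g \<in> carrier G. \<forall>h\<in>H. g \<otimes> h = h \<otimes> g}
      = {g \<in> carrier G. \<forall>\<sigma>. assignment G \<sigma> \<longrightarrow> expr_eval G (\<sigma>(0 := g)) \<delta> = \<one>}"
  proof (intro Collect_cong conj_cong refl)
    fix g assume g: "g \<in> carrier G"
    show "(\<forall>h\<in>H. g \<otimes> h = h \<otimes> g) \<longleftrightarrow> (\<forall>\<sigma>. assignment G \<sigma> \<longrightarrow> expr_eval G (\<sigma>(0 := g)) \<delta> = \<one>)"
    proof (intro iffI allI impI ballI)
      fix \<sigma> assume C: "\<forall>h\<in>H. g \<otimes> h = h \<otimes> g" and \<sigma>: "assignment G \<sigma>"
      have \<sigma>s: "assignment G (\<lambda>i. \<sigma> (Suc i))" using \<sigma> by (simp add: assignment_def)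
      then have "expr_eval G (\<lambda>i. \<sigma> (Suc i)) w \<in> H" unfolding Hw by blast
      then show "expr_eval G (\<sigma>(0 := g)) \<delta> = \<one>"
        using C ev[OF \<sigma> g] cm_one_iff g eval_closed[OF \<sigma>s w] by simp
    next
      fix h assume C: "\<forall>\<sigma>. assignment G \<sigma> \<longrightarrow> expr_eval G (\<sigma>(0 := g)) \<delta> = \<one>" and h: "h \<in> H"
      obtain \<pi> where \<pi>: "assignment G \<pi>" "h = expr_eval G \<pi> w" using h Hw by blast
      define \<sigma> where "\<sigma> i = (case i of 0 \<Rightarrow> \<one> | Suc j \<Rightarrow> \<pi> j)" for i
      have \<sigma>: "assignment G \<sigma>" using \<pi>(1) by (auto simp: assignment_def \<sigma>_def split: nat.split)
      have "(\<lambda>i. \<sigma> (Suc i)) = \<pi>" by (simp add: \<sigma>_def)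
      then have "cm G g h = \<one>" using C \<sigma> ev[OF \<sigma> g] \<pi>(2) by simp
      then show "g \<otimes> h = h \<otimes> g" using cm_one_iff g eval_closed[OF \<pi>(1) w] \<pi>(2) by simp
    qed
  qed
  then show ?thesis unfolding aud_def using \<delta>o by blast
qed

end



fun lift_atom :: "('g set \<Rightarrow> 'g) \<Rightarrow> 'g set atom \<Rightarrow> 'g atom" where
  "lift_atom r (Const C) = Const (r C)"
| "lift_atom r (Var i) = Var i"
| "lift_atom r (InvVar i) = InvVar i"

definition lift :: "('g set \<Rightarrow> 'g) \<Rightarrow> 'g set expr \<Rightarrow> 'g expr" where
  "lift r \<beta> = map (lift_atom r) \<beta>"

definition rep :: "'g set \<Rightarrow> 'g" where "rep C = (SOME x. x \<in> C)"

context group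
begin

lemma rep_props:
  assumes Ns: "subgroup N G" and C: "C \<in> carrier (G Mod N)"
  shows "rep C \<in> carrier G \<and> N #> rep C = C"
proof -
  obtain a where a: "a \<in> carrier G" "C = N #> a"
    using C unfolding carrier_FactGroup by blast
  have "a \<in> C" using rcos_self[OF a(1) Ns] a(2) by simp
  then have rC: "rep C \<in> C" unfolding rep_def by (rule someI)
  have "C \<subseteq> carrier G" unfolding a(2) by (rule r_coset_subset_G[OF subgroup.subset[OF Ns] a(1)])
  then have "rep C \<in> carrier G" using rC by blast
  moreover have "N #> a = N #> rep C"
    by (rule repr_independence[OF _ a(1) Ns]) (use rC a(2) in blast)
  then have "N #> rep C = C" using a(2) by metis
  ultimately show ?thesis by blast
qed

lemma expr_over_lift:
  assumes Ns: "subgroup N G" and b: "expr_over (G Mod N) \<beta>"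
  shows "expr_over G (lift rep \<beta>)"
  using b
proof (induction \<beta>)
  case (Cons a \<beta>)
  then show ?case using rep_props[OF Ns] by (cases a) (auto simp: lift_def)
qed (simp add: lift_def)

lemma eval_lift:
  assumes Nn: "N \<lhd> G" and \<rho>: "assignment G \<rho>" and b: "expr_over (G Mod N) \<beta>"
  shows "N #> expr_eval G \<rho> (lift rep \<beta>) = expr_eval (G Mod N) (\<lambda>i. N #> \<rho> i) \<beta>"
  using b
proof (induction \<beta>)
  interpret N: normal N G by (rule Nn)
  case Nil
  then show ?case by (simp add: lift_def N.subset)
next
  interpret N: normal N G by (rule Nn)
  case (Cons a \<beta>)
  have Ns: "subgroup N G" by (rule N.subgroup_axioms)
  have bl: "expr_over G (lift rep \<beta>)" using expr_over_lift[OF Ns] Cons.prems by simp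
  have al: "\<forall>g. lift_atom rep a = Const g \<longrightarrow> g \<in> carrier G"
    using Cons.prems rep_props[OF Ns] by (cases a) auto
  have av: "N #> atom_val G \<rho> (lift_atom rep a) = atom_val (G Mod N) (\<lambda>i. N #> \<rho> i) a"
  proof (cases a)
    case (Const C)
    then show ?thesis using Cons.prems rep_props[OF Ns] by auto
  next
    case (Var i)
    then show ?thesis by simp
  next
    case (InvVar i)
    have "\<rho> i \<in> carrier G" using \<rho> by (simp add: assignment_def)
    moreover have "N #> \<rho> i \<in> carrier (G Mod N)"
      using \<open>\<rho> i \<in> carrier G\<close> unfolding carrier_FactGroup by blast
    ultimately show ?thesis using InvVar N.rcos_inv N.inv_FactGroup by simp
  qed
  have "N #> expr_eval G \<rho> (lift rep (a # \<beta>))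
      = N #> (atom_val G \<rho> (lift_atom rep a) \<otimes> expr_eval G \<rho> (lift rep \<beta>))"
    by (simp add: lift_def)
  also have "\<dots> = (N #> atom_val G \<rho> (lift_atom rep a)) <#> (N #> expr_eval G \<rho> (lift rep \<beta>))"
    using N.rcos_sum atom_val_closed[OF \<rho> al] eval_closed[OF \<rho> bl] by simp
  also have "\<dots> = expr_eval (G Mod N) (\<lambda>i. N #> \<rho> i) (a # \<beta>)"
    using av Cons by simp
  finally show ?case .
qed


lemma part2:
  assumes Nn: "N \<lhd> G" and Hs: "subgroup H G" and NH: "N \<subseteq> H"
    and audQ: "aud (G Mod N) ((\<lambda>h. N #> h) ` H)" and audN: "aud G N"
  shows "aud G H"
proof -
  interpret Nn: normal N G by (rule Nn)
  interpret Q: group "G Mod N" by (rule Nn.factorgroup_is_group)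
  have Ns: "subgroup N G" by (rule Nn.subgroup_axioms)
  obtain \<beta> where bo: "expr_over (G Mod N) \<beta>" and bH: "(\<lambda>h. N #> h) ` H = {C \<in> carrier (G Mod N).
      \<forall>\<tau>. assignment (G Mod N) \<tau> \<longrightarrow> expr_eval (G Mod N) (\<tau>(0 := C)) \<beta> = \<one>\<^bsub>G Mod N\<^esub>}"
    using audQ unfolding aud_def by blast
  obtain \<alpha> where ao: "expr_over G \<alpha>" and aN: "N = {g \<in> carrier G.
      \<forall>\<sigma>. assignment G \<sigma> \<longrightarrow> expr_eval G (\<sigma>(0 := g)) \<alpha> = \<one>}"
    using audN unfolding aud_def by blast
  define gf :: "nat \<Rightarrow> 'a expr" where "gf i = (case i of 0 \<Rightarrow> [Var 0] | Suc j \<Rightarrow> [Var (2*j+1)])" for i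
  define ff where "ff i = (case i of 0 \<Rightarrow> subst G gf (lift rep \<beta>) | Suc j \<Rightarrow> [Var (2 * Suc j)])" for i :: nat
  define \<delta> where "\<delta> = subst G ff \<alpha>"
  have lo: "expr_over G (lift rep \<beta>)" by (rule expr_over_lift[OF Ns bo])
  have gfo: "expr_over G (gf i)" for i by (simp add: gf_def split: nat.split)
  have ffo: "expr_over G (ff i)" for i
    using expr_over_subst[OF lo gfo] by (simp add: ff_def split: nat.split)
  have \<delta>o: "expr_over G \<delta>" unfolding \<delta>_def by (rule expr_over_subst[OF ao ffo])
  define \<rho> where "\<rho> \<sigma> = (\<lambda>i. case i of 0 \<Rightarrow> \<sigma> 0 | Suc j \<Rightarrow> \<sigma> (2*j+1))" for \<sigma> :: "nat \<Rightarrow> 'a"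
  define T where "T \<sigma> = (\<lambda>i. case i of 0 \<Rightarrow> expr_eval G (\<rho> \<sigma>) (lift rep \<beta>) | Suc j \<Rightarrow> \<sigma> (2 * Suc j))"
    for \<sigma> :: "nat \<Rightarrow> 'a"
  have \<rho>a: "assignment G (\<rho> \<sigma>)" if \<sigma>: "assignment G \<sigma>" for \<sigma>
    using \<sigma> by (auto simp: assignment_def \<rho>_def split: nat.split)
  have ev: "expr_eval G \<sigma> \<delta> = expr_eval G (T \<sigma>) \<alpha>" if \<sigma>: "assignment G \<sigma>" for \<sigma>
  proof -
    have "expr_eval G \<sigma> \<delta> = expr_eval G (\<lambda>i. expr_eval G \<sigma> (ff i)) \<alpha>"
      unfolding \<delta>_def by (rule eval_subst[OF \<sigma> ao ffo])
    moreover have g: "(\<lambda>i. expr_eval G \<sigma> (gf i)) = \<rho> \<sigma>"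
    proof
      fix i show "expr_eval G \<sigma> (gf i) = \<rho> \<sigma> i"
        using \<sigma> by (cases i) (auto simp: gf_def \<rho>_def assignment_def)
    qed
    moreover have "(\<lambda>i. expr_eval G \<sigma> (ff i)) = T \<sigma>"
    proof
      fix i show "expr_eval G \<sigma> (ff i) = T \<sigma> i"
      proof (cases i)
        case 0
        then show ?thesis using eval_subst[OF \<sigma> lo gfo] g by (simp add: ff_def T_def)
      next
        case (Suc j)
        then show ?thesis using \<sigma> by (simp add: ff_def T_def assignment_def)
      qed
    qed
    ultimately show ?thesis by simp
  qed
  have Ta: "assignment G (T \<sigma>)" if \<sigma>: "assignment G \<sigma>" for \<sigma>
    using \<sigma> eval_closed[OF \<rho>a[OF \<sigma>] lo] by (auto simp: assignment_def T_def split: nat.split)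
  have Hc: "H \<subseteq> carrier G" using subgroup.subset[OF Hs] .
  have qa: "assignment (G Mod N) (\<lambda>i. N #> \<sigma> i)" if "assignment G \<sigma>" for \<sigma>
    using that unfolding assignment_def carrier_FactGroup by blast
  have "H = {g \<in> carrier G. \<forall>\<sigma>. assignment G \<sigma> \<longrightarrow> expr_eval G (\<sigma>(0 := g)) \<delta> = \<one>}"
  proof (intro equalityI subsetI)
    fix x assume xH: "x \<in> H"
    have xc: "x \<in> carrier G" using xH Hc by blast
    have img: "N #> x \<in> (\<lambda>h. N #> h) ` H" using xH by blast
    show "x \<in> {g \<in> carrier G. \<forall>\<sigma>. assignment G \<sigma> \<longrightarrow> expr_eval G (\<sigma>(0 := g)) \<delta> = \<one>}"
    proof (intro CollectI conjI allI impI xc)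
      fix \<sigma> assume \<sigma>: "assignment G \<sigma>"
      define \<sigma>' where "\<sigma>' = \<sigma>(0 := x)"
      have \<sigma>': "assignment G \<sigma>'" using \<sigma> xc by (simp add: assignment_def \<sigma>'_def)
      define \<pi> where "\<pi> = (\<lambda>i. N #> \<rho> \<sigma>' i)"
      have \<pi>: "assignment (G Mod N) \<pi>" unfolding \<pi>_def by (rule qa[OF \<rho>a[OF \<sigma>']])
      have \<pi>0: "\<pi>(0 := N #> x) = \<pi>"
      proof
        fix i show "(\<pi>(0 := N #> x)) i = \<pi> i" by (cases i) (simp_all add: \<pi>_def \<rho>_def \<sigma>'_def)
      qed
      have "expr_eval (G Mod N) (\<pi>(0 := N #> x)) \<beta> = N"
        using img \<pi> unfolding bH by simp
      then have e1: "N #> expr_eval G (\<rho> \<sigma>') (lift rep \<beta>) = N"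
        using eval_lift[OF Nn \<rho>a[OF \<sigma>'] bo] \<pi>0 by (simp add: \<pi>_def)
      have yc: "expr_eval G (\<rho> \<sigma>') (lift rep \<beta>) \<in> carrier G" using eval_closed[OF \<rho>a[OF \<sigma>'] lo] .
      have yN: "expr_eval G (\<rho> \<sigma>') (lift rep \<beta>) \<in> N" using coset_join1[OF e1 yc Ns] .
      have "T \<sigma>' = (T \<sigma>')(0 := expr_eval G (\<rho> \<sigma>') (lift rep \<beta>))" by (auto simp: T_def)
      moreover have "\<forall>\<sigma>. assignment G \<sigma> \<longrightarrow> expr_eval G (\<sigma>(0 := expr_eval G (\<rho> \<sigma>') (lift rep \<beta>))) \<alpha> = \<one>"
        using yN by (subst (asm) aN) simp
      ultimately have "expr_eval G (T \<sigma>') \<alpha> = \<one>"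
        using Ta[OF \<sigma>'] by metis
      then show "expr_eval G (\<sigma>(0 := x)) \<delta> = \<one>" using ev[OF \<sigma>'] by (simp add: \<sigma>'_def)
    qed
  next
    fix x assume "x \<in> {g \<in> carrier G. \<forall>\<sigma>. assignment G \<sigma> \<longrightarrow> expr_eval G (\<sigma>(0 := g)) \<delta> = \<one>}"
    then have xc: "x \<in> carrier G" and hyp: "\<And>\<sigma>. assignment G \<sigma> \<Longrightarrow> expr_eval G (\<sigma>(0 := x)) \<delta> = \<one>"
      by auto
    have xQ: "N #> x \<in> carrier (G Mod N)" using xc unfolding carrier_FactGroup by blast
    have "\<forall>\<pi>. assignment (G Mod N) \<pi> \<longrightarrow> expr_eval (G Mod N) (\<pi>(0 := N #> x)) \<beta> = N"
    proof (intro allI impI)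
      fix \<pi> assume \<pi>: "assignment (G Mod N) \<pi>"
      define r where "r i = rep (\<pi> i)" for i
      have r: "r i \<in> carrier G \<and> N #> r i = \<pi> i" for i
        unfolding r_def using rep_props[OF Ns] \<pi> by (simp add: assignment_def)
      define \<rho>0 where "\<rho>0 = (\<lambda>i. case i of 0 \<Rightarrow> x | Suc j \<Rightarrow> r (Suc j))"
      have \<rho>0a: "assignment G \<rho>0" using xc r by (auto simp: assignment_def \<rho>0_def split: nat.split)
      define y where "y = expr_eval G \<rho>0 (lift rep \<beta>)"
      have yc: "y \<in> carrier G" unfolding y_def using eval_closed[OF \<rho>0a lo] .
      have "\<forall>\<tau>. assignment G \<tau> \<longrightarrow> expr_eval G (\<tau>(0 := y)) \<alpha> = \<one>"
      proof (intro allI impI)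
        fix \<tau> assume \<tau>: "assignment G \<tau>"
        define \<sigma> where "\<sigma> i = (if i = 0 then \<one> else if odd i then r ((i+1) div 2) else \<tau> (i div 2))" for i
        have \<sigma>: "assignment G \<sigma>" using r \<tau> by (auto simp: assignment_def \<sigma>_def)
        have \<sigma>': "assignment G (\<sigma>(0 := x))" using \<sigma> xc by (simp add: assignment_def)
        have "\<rho> (\<sigma>(0 := x)) = \<rho>0"
        proof
          fix i show "\<rho> (\<sigma>(0 := x)) i = \<rho>0 i" by (cases i) (auto simp: \<rho>_def \<rho>0_def \<sigma>_def)
        qed
        then have "T (\<sigma>(0 := x)) = \<tau>(0 := y)"
          by (intro ext) (auto simp: T_def y_def \<sigma>_def split: nat.split)
        then show "expr_eval G (\<tau>(0 := y)) \<alpha> = \<one>" using hyp[OF \<sigma>] ev[OF \<sigma>'] by simp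
      qed
      then have "y \<in> N" using yc aN by blast
      then have "N #> y = N" using coset_join2[OF yc Ns] by simp
      moreover have "N #> y = expr_eval (G Mod N) (\<lambda>i. N #> \<rho>0 i) \<beta>"
        unfolding y_def by (rule eval_lift[OF Nn \<rho>0a bo])
      moreover have "(\<lambda>i. N #> \<rho>0 i) = \<pi>(0 := N #> x)"
      proof
        fix i show "N #> \<rho>0 i = (\<pi>(0 := N #> x)) i" using r by (cases i) (auto simp: \<rho>0_def)
      qed
      ultimately show "expr_eval (G Mod N) (\<pi>(0 := N #> x)) \<beta> = N" by simp
    qed
    then have "N #> x \<in> (\<lambda>h. N #> h) ` H" unfolding bH using xQ by simp
    then obtain h where h: "h \<in> H" "N #> x = N #> h" by blast
    have "x \<in> N #> h" using rcos_self[OF xc Ns] h(2) by simp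
    then obtain n where n: "n \<in> N" "x = n \<otimes> h" unfolding r_coset_def by blast
    show "x \<in> H" using n h(1) NH subgroup.m_closed[OF Hs] by blast
  qed
  then show ?thesis unfolding aud_def using \<delta>o by blast
qed

end



context group
begin

lemma aud_one: "aud G {\<one>}"
proof -
  have "{\<one>} = {g \<in> carrier G. \<forall>\<sigma>. assignment G \<sigma> \<longrightarrow> expr_eval G (\<sigma>(0 := g)) [Var 0] = \<one>}"
  proof (intro equalityI subsetI)
    fix g assume "g \<in> {\<one>}" then show "g \<in> {g \<in> carrier G. \<forall>\<sigma>. assignment G \<sigma> \<longrightarrow> expr_eval G (\<sigma>(0 := g)) [Var 0] = \<one>}"
      by simp
  next
    fix g assume g: "g \<in> {g \<in> carrier G. \<forall>\<sigma>. assignment G \<sigma> \<longrightarrow> expr_eval G (\<sigma>(0 := g)) [Var 0] = \<one>}"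
    have "assignment G (\<lambda>i. \<one>)" by (simp add: assignment_def)
    then show "g \<in> {\<one>}" using g by auto
  qed
  then show ?thesis unfolding aud_def by (intro exI[of _ "[Var 0]"]) simp
qed

lemma part3_step:
  assumes fin: "finite (carrier G)" and Un: "U \<lhd> G" and audU: "aud G U"
  shows "\<Union> (Fitting (G Mod U)) \<lhd> G \<and> aud G (\<Union> (Fitting (G Mod U)))"
proof -
  interpret Un: normal U G by (rule Un)
  interpret Q: group "G Mod U" by (rule Un.factorgroup_is_group)
  have Us: "subgroup U G" by (rule Un.subgroup_axioms)
  have finQ: "finite (carrier (G Mod U))" using fin unfolding carrier_FactGroup by simp
  let ?F = "Fitting (G Mod U)"
  have Fn: "?F \<lhd> G Mod U" using Q.Fitting_props[OF finQ] by blast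
  have audF: "aud (G Mod U) ?F" by (rule Q.part1[OF finQ])
  have FQ: "?F \<subseteq> carrier (G Mod U)" using Q.normal_sub[OF Fn] .
  have Fs: "subgroup ?F (G Mod U)" using normal_imp_subgroup[OF Fn] .
  let ?H = "\<Union> ?F"
  have Hdef: "?H = {g \<in> carrier G. U #> g \<in> ?F}"
  proof (intro equalityI subsetI)
    fix g assume "g \<in> ?H"
    then obtain C where C: "C \<in> ?F" "g \<in> C" by blast
    obtain a where a: "a \<in> carrier G" "C = U #> a" using C(1) FQ unfolding carrier_FactGroup by blast
    have "U #> a = U #> g" using repr_independence[OF _ a(1) Us] C(2) a(2) by simp
    moreover have "g \<in> carrier G" using C(2) a r_coset_subset_G[OF Un.subset a(1)] by blast
    ultimately show "g \<in> {g \<in> carrier G. U #> g \<in> ?F}" using C(1) a(2) by simp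
  next
    fix g assume "g \<in> {g \<in> carrier G. U #> g \<in> ?F}"
    then have g: "g \<in> carrier G" "U #> g \<in> ?F" by auto
    then show "g \<in> ?H" using rcos_self[OF g(1) Us] by blast
  qed
  have cQ: "U #> g \<in> carrier (G Mod U)" if "g \<in> carrier G" for g
    using that unfolding carrier_FactGroup by blast
  have Hs: "subgroup ?H G"
  proof (rule subgroupI)
    show "?H \<subseteq> carrier G" using Hdef by blast
    have "U #> \<one> \<in> ?F" using subgroup.one_closed[OF Fs] Un.subset by simp
    then show "?H \<noteq> {}" using Hdef by blast
    fix a assume a: "a \<in> ?H"
    then have ac: "a \<in> carrier G" and aF: "U #> a \<in> ?F" using Hdef by auto
    have "U #> inv a = inv\<^bsub>G Mod U\<^esub> (U #> a)"
      using Un.inv_FactGroup[OF cQ[OF ac]] Un.rcos_inv[OF ac] by simp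
    then have "U #> inv a \<in> ?F" using subgroup.m_inv_closed[OF Fs aF] by simp
    then show "inv a \<in> ?H" using Hdef ac by simp
    fix b assume b: "b \<in> ?H"
    then have bc: "b \<in> carrier G" and bF: "U #> b \<in> ?F" using Hdef by auto
    have "U #> (a \<otimes> b) = (U #> a) \<otimes>\<^bsub>G Mod U\<^esub> (U #> b)"
      using Un.rcos_sum[OF ac bc] by simp
    then have "U #> (a \<otimes> b) \<in> ?F" using subgroup.m_closed[OF Fs aF bF] by simp
    then show "a \<otimes> b \<in> ?H" using Hdef ac bc by simp
  qed
  have Hn: "?H \<lhd> G"
    unfolding normal_inv_iff
  proof (intro conjI Hs ballI)
    fix g h assume g: "g \<in> carrier G" and h: "h \<in> ?H"
    then have hc: "h \<in> carrier G" and hF: "U #> h \<in> ?F" using Hdef by auto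
    have "U #> (g \<otimes> h \<otimes> inv g) = (U #> g) \<otimes>\<^bsub>G Mod U\<^esub> (U #> h) \<otimes>\<^bsub>G Mod U\<^esub> inv\<^bsub>G Mod U\<^esub> (U #> g)"
      using Un.rcos_sum g hc Un.inv_FactGroup[OF cQ[OF g]] Un.rcos_inv[OF g] by simp
    also have "\<dots> \<in> ?F" using Fn cQ[OF g] hF Q.normal_inv_iff by blast
    finally show "g \<otimes> h \<otimes> inv g \<in> ?H" using Hdef g hc by simp
  qed
  have UH: "U \<subseteq> ?H"
  proof
    fix u assume u: "u \<in> U"
    have uc: "u \<in> carrier G" using u Un.subset by blast
    have "U #> u = U" using coset_join2[OF uc Us u] .
    then have "U #> u \<in> ?F" using subgroup.one_closed[OF Fs] by simp
    then show "u \<in> ?H" using Hdef uc by simp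
  qed
  have img: "(\<lambda>h. U #> h) ` ?H = ?F"
  proof (intro equalityI subsetI)
    fix C assume "C \<in> (\<lambda>h. U #> h) ` ?H"
    then show "C \<in> ?F" using Hdef by auto
  next
    fix C assume C: "C \<in> ?F"
    obtain a where a: "a \<in> carrier G" "C = U #> a" using C FQ unfolding carrier_FactGroup by blast
    then have "a \<in> ?H" using Hdef C by simp
    then show "C \<in> (\<lambda>h. U #> h) ` ?H" using a(2) by blast
  qed
  have "aud G ?H" by (rule part2[OF Un Hs UH]) (use img audF audU in simp_all)
  then show ?thesis using Hn by simp
qed

lemma part3:
  assumes fin: "finite (carrier G)"
  shows "upper_Fitting G i \<lhd> G \<and> aud G (upper_Fitting G i)"
proof (induction i)
  case 0
  then show ?case using one_is_normal aud_one by simp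
next
  case (Suc i)
  then show ?case using part3_step[OF fin] by simp
qed

end

theorem lemma2p6:
  fixes G :: "('a, 'b) monoid_scheme"
  assumes "group G" and "finite (carrier G)"
  shows "aud G (Fitting G)
    \<and> (\<forall>N H. subgroup N G \<longrightarrow> N \<lhd> G \<longrightarrow> subgroup H G \<longrightarrow> N \<subseteq> H \<longrightarrow>
            aud (G Mod N) ((\<lambda>h. N #>\<^bsub>G\<^esub> h) ` H) \<longrightarrow> aud G N \<longrightarrow> aud G H)
    \<and> (\<forall>i. aud G (upper_Fitting G i))
    \<and> (\<forall>H. subgroup H G \<longrightarrow> inducible G H \<longrightarrow>
            aud G {g \<in> carrier G. \<forall>h\<in>H. g \<otimes>\<^bsub>G\<^esub> h = h \<otimes>\<^bsub>G\<^esub> g})"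
  using group.part1[OF assms] group.part2[OF assms(1)] group.part3[OF assms] group.part4[OF assms(1)]
  by blast


end
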